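(* Let $K\in\mathbb{N}$, let $\mu$ be a positive even integer, let $h>0$, and let $\alpha<\beta\le\gamma<\delta$ be real numbers with $\beta-\alpha=\delta-\gamma=h$. Let $$\xi^1_\kappa=\alpha+\frac{\beta-\alpha}{K+1}\kappa,\qquad \xi^2_\kappa=\gamma+\frac{\delta-\gamma}{K+1}\kappa,\qquad \kappa=1,\dots,K,$$ and for $i=1,2$ set $$B_{\mu,i}(x)=\frac{\prod_{\kappa=1}^K|x-\xi^i_\kappa|^{-\mu}}{\prod_{\kappa=1}^K|x-\xi^1_\kappa|^{-\mu}+\prod_{\kappa=1}^K|x-\xi^2_\kappa|^{-\mu}}.$$ For $t\ge 0$ and $k\in\{1,\dots,K-1\}$ define $$F_\mu(t,h,k,K)=\left(\frac{k!\,(K-k)!}{\prod_{\kappa=1}^K(K-k+\kappa)+(K+1)^K\left(\frac{t}{h}\right)^K}\right)^{\mu}.$$ Then for every $k=1,\dots,K-1$ and every $x\in(\xi^1_k,\xi^1_{k+1})$, $$B_{\mu,2}(x)\le F_\mu(\gamma-\beta,h,k,K),$$ and for every $k=1,\dots,K-1$ and every $x\in(\xi^2_k,\xi^2_{k+1})$, $$B_{\mu,1}(x)\le \left(\frac{k!\,(K-k)!}{\prod_{\kappa=1}^K(k+\kappa)+(K+1)^K\left(\frac{\gamma-\beta}{h}\right)^K}\right)^{\mu}=F_\mu(\gamma-\beta,h,K-k,K).$$ *)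

theory Defs
  imports "HOL-Analysis.Analysis"
begin

definition xi :: "real \<Rightarrow> real \<Rightarrow> nat \<Rightarrow> nat \<Rightarrow> real" where
  "xi a b K \<kappa> = a + (b - a) / real (K + 1) * real \<kappa>"

definition wprod :: "nat \<Rightarrow> real \<Rightarrow> real \<Rightarrow> nat \<Rightarrow> real \<Rightarrow> real" where
  "wprod \<mu> a b K x = (\<Prod>\<kappa>=1..K. inverse (\<bar>x - xi a b K \<kappa>\<bar> ^ \<mu>))"

definition B1 :: "nat \<Rightarrow> real \<Rightarrow> real \<Rightarrow> real \<Rightarrow> real \<Rightarrow> nat \<Rightarrow> real \<Rightarrow> real" where
  "B1 \<mu> \<alpha> \<beta> \<gamma> \<delta> K x =
     wprod \<mu> \<alpha> \<beta> K x / (wprod \<mu> \<alpha> \<beta> K x + wprod \<mu> \<gamma> \<delta> K x)"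

definition B2 :: "nat \<Rightarrow> real \<Rightarrow> real \<Rightarrow> real \<Rightarrow> real \<Rightarrow> nat \<Rightarrow> real \<Rightarrow> real" where
  "B2 \<mu> \<alpha> \<beta> \<gamma> \<delta> K x =
     wprod \<mu> \<gamma> \<delta> K x / (wprod \<mu> \<alpha> \<beta> K x + wprod \<mu> \<gamma> \<delta> K x)"

definition F :: "nat \<Rightarrow> real \<Rightarrow> real \<Rightarrow> nat \<Rightarrow> nat \<Rightarrow> real" where
  "F \<mu> t h k K =
     (fact k * fact (K - k) /
       ((\<Prod>\<kappa>=1..K. real (K - k + \<kappa>)) + real (K + 1) ^ K * (t / h) ^ K)) ^ \<mu>"

end

theory Submission
  imports Defs
begin

lemma fact_rev_real: "(\<Prod>\<kappa>=1..k. real (k+1-\<kappa>)) = fact k"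
proof -
  have "(\<Prod>\<kappa>=1..k. real (k+1-\<kappa>)) = (\<Prod>\<kappa>=1..k. real (k+1-(k+1-\<kappa>)))"
    using prod.atLeastAtMost_rev[of "\<lambda>\<kappa>. real (k+1-\<kappa>)" 1 k] by (simp add: add.commute)
  also have "\<dots> = (\<Prod>\<kappa>=1..k. real \<kappa>)"
    by (rule prod.cong) auto
  also have "\<dots> = fact k" by (simp add: fact_prod)
  finally show ?thesis .
qed

lemma fact_split:
  assumes "k \<le> K"
  shows "(\<Prod>\<kappa>=1..K. (if \<kappa> \<le> k then real (k+1-\<kappa>) else real (\<kappa> - k))) = fact k * fact (K-k)"
  using assms
proof (induction K rule: dec_induct)
  case base
  have "(\<Prod>\<kappa>=1..k. (if \<kappa> \<le> k then real (k+1-\<kappa>) else real (\<kappa> - k))) = (\<Prod>\<kappa>=1..k. real (k+1-\<kappa>))"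
    by (rule prod.cong) auto
  then show ?case using fact_rev_real by simp
next
  case (step n)
  have "(\<Prod>\<kappa>=1..Suc n. (if \<kappa> \<le> k then real (k+1-\<kappa>) else real (\<kappa> - k)))
     = (\<Prod>\<kappa>=1..n. (if \<kappa> \<le> k then real (k+1-\<kappa>) else real (\<kappa> - k))) * real (Suc n - k)"
    using step by (simp add: prod.cl_ivl_Suc)
  also have "\<dots> = fact k * fact (Suc n - k)"
    using step by (simp add: Suc_diff_le fact_Suc)
  finally show ?case .
qed

lemma prod_add_ge:
  fixes a :: "nat \<Rightarrow> real"
  assumes "finite A" "A \<noteq> {}" "\<And>i. i \<in> A \<Longrightarrow> a i \<ge> 0" "t \<ge> 0"
  shows "(\<Prod>i\<in>A. a i + t) \<ge> (\<Prod>i\<in>A. a i) + t ^ card A"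
  using assms
proof (induction A rule: finite_ne_induct)
  case (singleton x)
  then show ?case by simp
next
  case (insert x F)
  have P: "(\<Prod>i\<in>F. a i) \<ge> 0" using insert by (simp add: prod_nonneg)
  have IH: "(\<Prod>i\<in>F. a i + t) \<ge> (\<Prod>i\<in>F. a i) + t ^ card F" using insert by auto
  have "(\<Prod>i\<in>insert x F. a i + t) = (a x + t) * (\<Prod>i\<in>F. a i + t)" using insert by simp
  also have "\<dots> \<ge> (a x + t) * ((\<Prod>i\<in>F. a i) + t ^ card F)"
    using IH insert by (intro mult_left_mono) auto
  finally have "(\<Prod>i\<in>insert x F. a i + t) \<ge> a x * (\<Prod>i\<in>F. a i) + t * t ^ card F + (a x * t ^ card F + t * (\<Prod>i\<in>F. a i))"
    by (simp add: algebra_simps)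
  moreover have "a x * t ^ card F + t * (\<Prod>i\<in>F. a i) \<ge> 0" using P insert by simp
  ultimately show ?case using insert by simp
qed

lemma num_bound:
  fixes s a x :: real
  assumes "s > 0" "k \<le> K" "a + s * real k < x" "x < a + s * real (k+1)"
  shows "0 < (\<Prod>\<kappa>=1..K. \<bar>x - (a + s * real \<kappa>)\<bar>)"
    and "(\<Prod>\<kappa>=1..K. \<bar>x - (a + s * real \<kappa>)\<bar>) \<le> s ^ K * (fact k * fact (K-k))"
proof -
  have fac: "0 < \<bar>x - (a + s * real \<kappa>)\<bar> \<and>
     \<bar>x - (a + s * real \<kappa>)\<bar> \<le> s * (if \<kappa> \<le> k then real (k+1-\<kappa>) else real (\<kappa> - k))" for \<kappa>
  proof (cases "\<kappa> \<le> k")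
    case True
    then have "s * real \<kappa> \<le> s * real k" using assms by simp
    moreover have "real (k+1-\<kappa>) = real k + 1 - real \<kappa>" using True by simp
    ultimately have "x - (a + s * real \<kappa>) > 0" "x - (a + s * real \<kappa>) \<le> s * real (k+1-\<kappa>)"
      using True assms by (simp_all add: algebra_simps, linarith)
    then show ?thesis using True by simp
  next
    case False
    then have "s * real \<kappa> \<ge> s * real (k+1)" using assms by simp
    moreover have "real (\<kappa> - k) = real \<kappa> - real k" using False by simp
    ultimately have "(a + s * real \<kappa>) - x > 0" "(a + s * real \<kappa>) - x \<le> s * real (\<kappa> - k)"
      using False assms by (simp_all add: algebra_simps)
    then show ?thesis using False by simp
  qed
  show "0 < (\<Prod>\<kappa>=1..K. \<bar>x - (a + s * real \<kappa>)\<bar>)"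
    using fac by (intro prod_pos) auto
  have "(\<Prod>\<kappa>=1..K. \<bar>x - (a + s * real \<kappa>)\<bar>)
     \<le> (\<Prod>\<kappa>=1..K. s * (if \<kappa> \<le> k then real (k+1-\<kappa>) else real (\<kappa> - k)))"
    using fac by (intro prod_mono) (auto intro: less_imp_le)
  also have "\<dots> = s ^ K * (fact k * fact (K-k))"
    using fact_split[OF assms(2)] by (simp add: prod.distrib)
  finally show "(\<Prod>\<kappa>=1..K. \<bar>x - (a + s * real \<kappa>)\<bar>) \<le> s ^ K * (fact k * fact (K-k))" .
qed

lemma den_bound1:
  fixes s a c x t :: real
  assumes "s > 0" "t \<ge> 0" "k \<le> K" "K \<ge> 1" "x < a + s * real (k+1)" "a + s * real (K+1) + t \<le> c"
  shows "(\<Prod>\<kappa>=1..K. \<bar>x - (c + s * real \<kappa>)\<bar>) \<ge> s ^ K * (\<Prod>\<kappa>=1..K. real (K - k + \<kappa>)) + t ^ K"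
proof -
  have fac: "\<bar>x - (c + s * real \<kappa>)\<bar> \<ge> s * real (K - k + \<kappa>) + t" for \<kappa>
  proof -
    have "real (K - k + \<kappa>) = real K - real k + real \<kappa>" using assms by simp
    then have "s * real (K - k + \<kappa>) = s * real K - s * real k + s * real \<kappa>" by (simp add: algebra_simps)
    then show ?thesis using assms by (simp add: algebra_simps)
  qed
  have "(\<Prod>\<kappa>=1..K. \<bar>x - (c + s * real \<kappa>)\<bar>) \<ge> (\<Prod>\<kappa>=1..K. s * real (K - k + \<kappa>) + t)"
    using fac assms by (intro prod_mono) auto
  moreover have "(\<Prod>\<kappa>=1..K. s * real (K - k + \<kappa>) + t) \<ge> (\<Prod>\<kappa>=1..K. s * real (K - k + \<kappa>)) + t ^ card {1..K}"
    using assms by (intro prod_add_ge) auto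
  ultimately show ?thesis by (simp add: prod.distrib)
qed

lemma den_bound2:
  fixes s a c x t :: real
  assumes "s > 0" "t \<ge> 0" "k \<le> K" "K \<ge> 1" "c + s * real k < x" "a + s * real (K+1) + t \<le> c"
  shows "(\<Prod>\<kappa>=1..K. \<bar>x - (a + s * real \<kappa>)\<bar>) \<ge> s ^ K * (\<Prod>\<kappa>=1..K. real (k + \<kappa>)) + t ^ K"
proof -
  have fac: "\<kappa> \<le> K \<Longrightarrow> \<bar>x - (a + s * real \<kappa>)\<bar> \<ge> s * real (K + 1 + k - \<kappa>) + t" for \<kappa>
  proof -
    assume k: "\<kappa> \<le> K"
    have "real (K + 1 + k - \<kappa>) = real K + 1 + real k - real \<kappa>" using k by simp
    then have "s * real (K + 1 + k - \<kappa>) = s * real K + s + s * real k - s * real \<kappa>" by (simp add: algebra_simps)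
    then show ?thesis using assms by (simp add: algebra_simps)
  qed
  have "(\<Prod>\<kappa>=1..K. \<bar>x - (a + s * real \<kappa>)\<bar>) \<ge> (\<Prod>\<kappa>=1..K. s * real (K + 1 + k - \<kappa>) + t)"
    using fac assms by (intro prod_mono) auto
  moreover have "(\<Prod>\<kappa>=1..K. s * real (K + 1 + k - \<kappa>) + t) \<ge> (\<Prod>\<kappa>=1..K. s * real (K + 1 + k - \<kappa>)) + t ^ card {1..K}"
    using assms by (intro prod_add_ge) auto
  moreover have "(\<Prod>\<kappa>=1..K. real (K + 1 + k - \<kappa>)) = (\<Prod>\<kappa>=1..K. real (K + 1 + k - (K + 1 - \<kappa>)))"
    using prod.atLeastAtMost_rev[of "\<lambda>\<kappa>. real (K + 1 + k - \<kappa>)" 1 K] by (simp add: add.commute)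
  moreover have "\<dots> = (\<Prod>\<kappa>=1..K. real (k + \<kappa>))"
    by (rule prod.cong) auto
  ultimately show ?thesis by (simp add: prod.distrib)
qed

lemma final:
  fixes A1 A2 s t D fk h :: real
  assumes "A1 > 0" "A2 > 0" "A1 \<le> s ^ K * fk" "A2 \<ge> s ^ K * D + t ^ K" "D > 0" "s > 0" "t \<ge> 0"
    "h = s * real (K+1)"
  shows "inverse (A2 ^ \<mu>) / (inverse (A1 ^ \<mu>) + inverse (A2 ^ \<mu>)) \<le> (fk / (D + real (K+1) ^ K * (t / h) ^ K)) ^ \<mu>"
proof -
  have "inverse (A2 ^ \<mu>) / (inverse (A1 ^ \<mu>) + inverse (A2 ^ \<mu>)) = A1 ^ \<mu> / (A1 ^ \<mu> + A2 ^ \<mu>)"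
    using assms by (simp add: field_simps)
  also have "\<dots> \<le> A1 ^ \<mu> / A2 ^ \<mu>"
  proof -
    have "A1 ^ \<mu> > 0" "A2 ^ \<mu> > 0" using assms by auto
    then show ?thesis by (intro divide_left_mono) auto
  qed
  also have "\<dots> = (A1 / A2) ^ \<mu>" by (simp add: power_divide)
  also have "\<dots> \<le> ((s ^ K * fk) / (s ^ K * D + t ^ K)) ^ \<mu>"
  proof (rule power_mono)
    have "0 < s ^ K * D" using assms by simp
    moreover have "t ^ K \<ge> 0" using assms by simp
    ultimately have "0 < s ^ K * D + t ^ K" by linarith
    then show "A1 / A2 \<le> s ^ K * fk / (s ^ K * D + t ^ K)"
      using assms by (intro frac_le) auto
  qed (use assms in auto)
  also have "(s ^ K * fk) / (s ^ K * D + t ^ K) = fk / (D + real (K+1) ^ K * (t / h) ^ K)"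
  proof -
    have "real (K+1) ^ K * (t / h) ^ K = t ^ K / s ^ K"
    proof -
      have "real (K+1) > 0" by simp
      then have e: "real (K+1) * (t / h) = t / s" unfolding assms(8) using assms(6)
        by (simp add: field_simps del: of_nat_Suc)
      have "real (K+1) ^ K * (t / h) ^ K = (real (K+1) * (t / h)) ^ K" by (rule power_mult_distrib[symmetric])
      also have "\<dots> = t ^ K / s ^ K" unfolding e by (simp add: power_divide)
      finally show ?thesis .
    qed
    moreover have "(s ^ K * fk) / (s ^ K * D + t ^ K) = fk / (D + t ^ K / s ^ K)"
      using assms(6) by (simp add: field_simps)
    ultimately show ?thesis by simp
  qed
  finally show ?thesis .
qed

lemma wprod_eq: "wprod \<mu> a b K x = inverse ((\<Prod>\<kappa>=1..K. \<bar>x - xi a b K \<kappa>\<bar>) ^ \<mu>)"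
  unfolding wprod_def prod_power_distrib using prod_inversef[of "\<lambda>\<kappa>. \<bar>x - xi a b K \<kappa>\<bar> ^ \<mu>" "{1..K}"]
  by (simp add: comp_def)

theorem lemma1:
  fixes K \<mu> :: nat and h \<alpha> \<beta> \<gamma> \<delta> :: real
  assumes "\<mu> > 0" and "even \<mu>" and "h > 0"
    and "\<alpha> < \<beta>" and "\<beta> \<le> \<gamma>" and "\<gamma> < \<delta>"
    and "\<beta> - \<alpha> = h" and "\<delta> - \<gamma> = h"
  shows "(\<forall>k \<in> {1..K-1}. \<forall>x. xi \<alpha> \<beta> K k < x \<and> x < xi \<alpha> \<beta> K (k + 1) \<longrightarrow>
            B2 \<mu> \<alpha> \<beta> \<gamma> \<delta> K x \<le> F \<mu> (\<gamma> - \<beta>) h k K)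
       \<and> (\<forall>k \<in> {1..K-1}. \<forall>x. xi \<gamma> \<delta> K k < x \<and> x < xi \<gamma> \<delta> K (k + 1) \<longrightarrow>
            B1 \<mu> \<alpha> \<beta> \<gamma> \<delta> K x
              \<le> (fact k * fact (K - k) /
                  ((\<Prod>\<kappa>=1..K. real (k + \<kappa>)) + real (K + 1) ^ K * ((\<gamma> - \<beta>) / h) ^ K)) ^ \<mu>
            \<and> (fact k * fact (K - k) /
                  ((\<Prod>\<kappa>=1..K. real (k + \<kappa>)) + real (K + 1) ^ K * ((\<gamma> - \<beta>) / h) ^ K)) ^ \<mu>
              = F \<mu> (\<gamma> - \<beta>) h (K - k) K)"
proof -
  define s where "s = h / real (K+1)"
  have s0: "s > 0" using assms unfolding s_def by simp
  have hs: "h = s * real (K+1)" unfolding s_def by simp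
  have x1: "xi \<alpha> \<beta> K \<kappa> = \<alpha> + s * real \<kappa>" for \<kappa>
    unfolding xi_def s_def using assms by simp
  have x2: "xi \<gamma> \<delta> K \<kappa> = \<gamma> + s * real \<kappa>" for \<kappa>
    unfolding xi_def s_def using assms by simp
  have t0: "\<gamma> - \<beta> \<ge> 0" using assms by simp
  have sep: "\<alpha> + s * real (K+1) + (\<gamma> - \<beta>) \<le> \<gamma>" using hs assms by simp
  have P1: "\<forall>k \<in> {1..K-1}. \<forall>x. xi \<alpha> \<beta> K k < x \<and> x < xi \<alpha> \<beta> K (k + 1) \<longrightarrow>
            B2 \<mu> \<alpha> \<beta> \<gamma> \<delta> K x \<le> F \<mu> (\<gamma> - \<beta>) h k K"
  proof (intro ballI allI impI)
    fix k x assume k: "k \<in> {1..K-1}" and xr: "xi \<alpha> \<beta> K k < x \<and> x < xi \<alpha> \<beta> K (k + 1)"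
    have kK: "k \<le> K" "K \<ge> 1" using k by auto
    have xa: "\<alpha> + s * real k < x" "x < \<alpha> + s * real (k+1)" using xr x1 by auto
    note N = num_bound[OF s0 kK(1) xa]
    note Dn = den_bound1[OF s0 t0 kK xa(2) sep]
    have Dpos: "(\<Prod>\<kappa>=1..K. real (K - k + \<kappa>)) > 0" by (intro prod_pos) auto
    have A2pos: "(\<Prod>\<kappa>=1..K. \<bar>x - (\<gamma> + s * real \<kappa>)\<bar>) > 0"
    proof -
      have "s ^ K * (\<Prod>\<kappa>=1..K. real (K - k + \<kappa>)) > 0" using s0 Dpos by simp
      moreover have "(\<gamma> - \<beta>) ^ K \<ge> 0" using t0 by simp
      ultimately show ?thesis using Dn by linarith
    qed
    have "B2 \<mu> \<alpha> \<beta> \<gamma> \<delta> K x \<le> (fact k * fact (K-k) / ((\<Prod>\<kappa>=1..K. real (K - k + \<kappa>)) + real (K+1) ^ K * ((\<gamma> - \<beta>) / h) ^ K)) ^ \<mu>"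
      unfolding B2_def wprod_eq x1 x2
      by (rule final[OF N(1) A2pos N(2) Dn Dpos s0 t0 hs])
    then show "B2 \<mu> \<alpha> \<beta> \<gamma> \<delta> K x \<le> F \<mu> (\<gamma> - \<beta>) h k K" unfolding F_def .
  qed
  have P2: "\<forall>k \<in> {1..K-1}. \<forall>x. xi \<gamma> \<delta> K k < x \<and> x < xi \<gamma> \<delta> K (k + 1) \<longrightarrow>
            B1 \<mu> \<alpha> \<beta> \<gamma> \<delta> K x
              \<le> (fact k * fact (K - k) /
                  ((\<Prod>\<kappa>=1..K. real (k + \<kappa>)) + real (K + 1) ^ K * ((\<gamma> - \<beta>) / h) ^ K)) ^ \<mu>
            \<and> (fact k * fact (K - k) /
                  ((\<Prod>\<kappa>=1..K. real (k + \<kappa>)) + real (K + 1) ^ K * ((\<gamma> - \<beta>) / h) ^ K)) ^ \<mu>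
              = F \<mu> (\<gamma> - \<beta>) h (K - k) K"
  proof (intro ballI allI impI conjI)
    fix k x assume k: "k \<in> {1..K-1}" and xr: "xi \<gamma> \<delta> K k < x \<and> x < xi \<gamma> \<delta> K (k + 1)"
    have kK: "k \<le> K" "K \<ge> 1" using k by auto
    have xa: "\<gamma> + s * real k < x" "x < \<gamma> + s * real (k+1)" using xr x2 by auto
    note N = num_bound[OF s0 kK(1) xa]
    note Dn = den_bound2[OF s0 t0 kK xa(1) sep]
    have Dpos: "(\<Prod>\<kappa>=1..K. real (k + \<kappa>)) > 0" by (intro prod_pos) auto
    have A2pos: "(\<Prod>\<kappa>=1..K. \<bar>x - (\<alpha> + s * real \<kappa>)\<bar>) > 0"
    proof -
      have "s ^ K * (\<Prod>\<kappa>=1..K. real (k + \<kappa>)) > 0" using s0 Dpos by simp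
      moreover have "(\<gamma> - \<beta>) ^ K \<ge> 0" using t0 by simp
      ultimately show ?thesis using Dn by linarith
    qed
    show "B1 \<mu> \<alpha> \<beta> \<gamma> \<delta> K x
              \<le> (fact k * fact (K - k) /
                  ((\<Prod>\<kappa>=1..K. real (k + \<kappa>)) + real (K + 1) ^ K * ((\<gamma> - \<beta>) / h) ^ K)) ^ \<mu>"
      unfolding B1_def wprod_eq x1 x2 add.commute[of "inverse ((\<Prod>\<kappa>=1..K. \<bar>x - (\<alpha> + s * real \<kappa>)\<bar>) ^ \<mu>)"]
      by (rule final[OF N(1) A2pos N(2) Dn Dpos s0 t0 hs])
    show "(fact k * fact (K - k) /
                  ((\<Prod>\<kappa>=1..K. real (k + \<kappa>)) + real (K + 1) ^ K * ((\<gamma> - \<beta>) / h) ^ K)) ^ \<mu>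
              = F \<mu> (\<gamma> - \<beta>) h (K - k) K"
      unfolding F_def using kK by (simp add: mult.commute)
  qed
  show ?thesis using P1 P2 by blast
qed

end
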